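(* Define $q:\mathbb R_+\times\mathbb R^4\times\mathbb R^4\to\mathbb R$ by $$q(\Sigma,\mathbf a,\boldsymbol\zeta)=\nu a_1+\frac12a_2(\sigma^2-\Sigma^2)+\sigma\eta a_3+\frac12(\eta^2+\xi)a_4,$$ where $\mathbf a=(a_1,a_2,a_3,a_4)^\top$ and $\boldsymbol\zeta=(\nu,\sigma,\eta,\xi)^\top$. Then for all $\Sigma\in\mathbb R_+$, $\mathbf a\in\mathbb R^4$, $\boldsymbol\zeta\in\mathbb R^4$, $$|q(\Sigma,\mathbf a,\boldsymbol\zeta)|\le\max(1,\Sigma)\|\mathbf a\|\,\|\boldsymbol\zeta-\boldsymbol\zeta^0(\Sigma)\|+\|\mathbf a\|\,\|\boldsymbol\zeta-\boldsymbol\zeta^0(\Sigma)\|^2.$$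
   Context: $\boldsymbol\zeta^0(\Sigma)=(0,\Sigma,0,0)^\top$ and $\|\cdot\|$ denotes the Euclidean norm on $\mathbb R^4$. *)

theory Defs
  imports "HOL-Analysis.Analysis"
begin

definition zeta0 :: "real \<Rightarrow> real^4" where
  "zeta0 S = vector [0, S, 0, 0]"

definition q :: "real \<Rightarrow> real^4 \<Rightarrow> real^4 \<Rightarrow> real" where
  "q S a z = (let \<nu> = z$1; \<sigma> = z$2; \<eta> = z$3; \<xi> = z$4 in
     \<nu> * a$1 + (1/2) * a$2 * (\<sigma>^2 - S^2) + \<sigma> * \<eta> * a$3 + (1/2) * (\<eta>^2 + \<xi>) * a$4)"

end

theory Submission
  imports Defs
begin

lemma vector_4:
 "(vector [x,y,z,w] ::('a::zero)^4)$1 = x"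
 "(vector [x,y,z,w] ::('a::zero)^4)$2 = y"
 "(vector [x,y,z,w] ::('a::zero)^4)$3 = z"
 "(vector [x,y,z,w] ::('a::zero)^4)$4 = w"
  unfolding vector_def by simp_all

lemma sum4: "(\<Sum>i\<in>(UNIV::4 set). f i) = f 1 + f 2 + f 3 + (f 4::real)"
  by (rule sum_4)

lemma normsq4: "(norm (x::real^4))^2 = x$1^2 + x$2^2 + x$3^2 + x$4^2"
  by (simp add: norm_vec_def L2_set_def sum4 sum_nonneg)

lemma inner4: "inner (x::real^4) y = x$1*y$1 + x$2*y$2 + x$3*y$3 + x$4*y$4"
  by (simp add: inner_vec_def sum4)

theorem lemma5p4:
  fixes S :: real and a z :: "real^4"
  assumes "S > 0"
  shows "\<bar>q S a z\<bar> \<le> max 1 S * norm a * norm (z - zeta0 S) + norm a * (norm (z - zeta0 S))^2"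
proof -
  define d where "d = z - zeta0 S"
  define M where "M = max 1 S"
  define b :: "real^4" where "b = vector [a$1, S * a$2, S * a$3, a$4/2]"
  have z0: "zeta0 S $ 1 = 0" "zeta0 S $ 2 = S" "zeta0 S $ 3 = 0" "zeta0 S $ 4 = 0"
    by (simp_all add: zeta0_def vector_4)
  have dc: "d$1 = z$1" "d$2 = z$2 - S" "d$3 = z$3" "d$4 = z$4"
    by (simp_all add: d_def z0)
  have bc: "b$1 = a$1" "b$2 = S*a$2" "b$3 = S*a$3" "b$4 = a$4/2"
    by (simp_all add: b_def vector_4)
  have split: "q S a z = inner b d + (a$2*d$2^2/2 + a$3*d$2*d$3 + a$4*d$3^2/2)"
    unfolding q_def Let_def inner4 bc dc by (simp add: field_simps power2_eq_square)
  have M1: "M \<ge> 1" "M \<ge> S" by (auto simp: M_def)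
  have "(norm b)^2 \<le> (M * norm a)^2"
  proof -
    have "(norm b)^2 = a$1^2 + S^2*a$2^2 + S^2*a$3^2 + a$4^2/4"
      by (simp add: normsq4 bc power_mult_distrib power_divide)
    also have "\<dots> \<le> M^2*a$1^2 + M^2*a$2^2 + M^2*a$3^2 + M^2*a$4^2"
    proof -
      have "1 \<le> M^2" using M1 by (simp add: one_le_power)
      moreover have "S^2 \<le> M^2" using M1 assms by (intro power_mono) auto
      ultimately have h1: "a$1^2 \<le> M^2*a$1^2" and h2: "S^2*a$2^2 \<le> M^2*a$2^2"
        and h3: "S^2*a$3^2 \<le> M^2*a$3^2" and h4: "a$4^2 \<le> M^2*a$4^2"
        using mult_right_mono[of 1 "M^2" "a$1^2"] mult_right_mono[of "S^2" "M^2" "a$2^2"]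
          mult_right_mono[of "S^2" "M^2" "a$3^2"] mult_right_mono[of 1 "M^2" "a$4^2"]
          by auto
      have h4': "a$4^2/4 \<le> M^2*a$4^2" using h4 zero_le_power2[of "a$4"] by linarith
      show ?thesis using h1 h2 h3 h4' by linarith
    qed
    also have "\<dots> = (M * norm a)^2" by (simp add: power_mult_distrib normsq4 algebra_simps)
    finally show ?thesis .
  qed
  hence nb: "norm b \<le> M * norm a"
  proof (rule power2_le_imp_le)
    show "0 \<le> M * norm a" using M1 by simp
  qed
  have lin: "\<bar>inner b d\<bar> \<le> M * norm a * norm d"
  proof -
    have "norm b * norm d \<le> M * norm a * norm d" using nb norm_ge_zero[of d] by (rule mult_right_mono)
    thus ?thesis using Cauchy_Schwarz_ineq2[of b d] by linarith
  qed
  define A where "A = norm a"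
  define D where "D = norm d"
  have ai: "\<bar>a$i\<bar> \<le> A" for i using component_le_norm_cart A_def by blast
  have dd: "d$2^2 + d$3^2 \<le> D^2" using normsq4[of d] D_def
    using zero_le_power2[of "d$1"] zero_le_power2[of "d$4"] unfolding D_def by linarith
  have A0: "A \<ge> 0" by (simp add: A_def)
  have "\<bar>a$2*d$2^2/2 + a$3*d$2*d$3 + a$4*d$3^2/2\<bar>
        \<le> \<bar>a$2\<bar>*d$2^2/2 + \<bar>a$3\<bar>*(\<bar>d$2\<bar>*\<bar>d$3\<bar>) + \<bar>a$4\<bar>*d$3^2/2"
  proof -
    have e1: "\<bar>a$2*d$2^2/2\<bar> = \<bar>a$2\<bar>*d$2^2/2" by (simp add: abs_mult)
    have e2: "\<bar>a$3*d$2*d$3\<bar> = \<bar>a$3\<bar>*(\<bar>d$2\<bar>*\<bar>d$3\<bar>)" by (simp add: abs_mult)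
    have e3: "\<bar>a$4*d$3^2/2\<bar> = \<bar>a$4\<bar>*d$3^2/2" by (simp add: abs_mult)
    show ?thesis using e1 e2 e3 abs_triangle_ineq[of "a$2*d$2^2/2 + a$3*d$2*d$3" "a$4*d$3^2/2"]
      abs_triangle_ineq[of "a$2*d$2^2/2" "a$3*d$2*d$3"] by linarith
  qed
  also have "\<dots> \<le> A*d$2^2/2 + A*(\<bar>d$2\<bar>*\<bar>d$3\<bar>) + A*d$3^2/2"
  proof -
    have f1: "\<bar>a$2\<bar>*d$2^2 \<le> A*d$2^2" using ai[of 2] zero_le_power2[of "d$2"] by (rule mult_right_mono)
    have f2: "\<bar>a$3\<bar>*(\<bar>d$2\<bar>*\<bar>d$3\<bar>) \<le> A*(\<bar>d$2\<bar>*\<bar>d$3\<bar>)"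
      using ai[of 3] by (rule mult_right_mono) simp
    have f3: "\<bar>a$4\<bar>*d$3^2 \<le> A*d$3^2" using ai[of 4] zero_le_power2[of "d$3"] by (rule mult_right_mono)
    show ?thesis using f1 f2 f3 by linarith
  qed
  also have "\<dots> \<le> A*(d$2^2 + d$3^2)"
  proof -
    have "\<bar>d$2\<bar>*\<bar>d$3\<bar> \<le> (d$2^2 + d$3^2)/2"
      using sum_squares_bound[of "\<bar>d$2\<bar>" "\<bar>d$3\<bar>"] by simp
    hence "A*(\<bar>d$2\<bar>*\<bar>d$3\<bar>) \<le> A*((d$2^2 + d$3^2)/2)" using A0 by (rule mult_left_mono)
    thus ?thesis by (simp add: algebra_simps)
  qed
  also have "\<dots> \<le> A * D^2" using dd A0 by (rule mult_left_mono)
  finally have quad: "\<bar>a$2*d$2^2/2 + a$3*d$2*d$3 + a$4*d$3^2/2\<bar> \<le> A * D^2" .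
  have fin: "\<bar>q S a z\<bar> \<le> M * A * D + A * D^2"
    using split lin quad abs_triangle_ineq[of "inner b d" "a$2*d$2^2/2 + a$3*d$2*d$3 + a$4*d$3^2/2"]
    unfolding A_def D_def by linarith
  show ?thesis using fin by (simp only: M_def A_def D_def d_def)
qed

end
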